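(* Let $\lambda$ be a strict partition, $\mu$ any probability distribution on $J(P^{\mathrm{shift}}_\lambda)$, and $[i,j]\in P^{\mathrm{shift}}_\lambda$. Then \[\mathbb{E}(\mu;R^{\mathrm{shift}}_{ij})=1+\sum_{c\in C^{\mathrm{shift}}_{ij}(\lambda)}\mathbb{P}(\nu\sim\mu;\ c\in\nu).\]
   Context: Strict partitions, $P^{\mathrm{shift}}_\lambda$ (boxes $[i,j]$, $1\le i\le\ell(\lambda)$, $i\le j\le i+\lambda_i-1$, ordered componentwise), and toggle statistics $\mathcal{T}^\pm_p$ (with $\mathcal{T}^+_p(I)=1$ iff $p\notin I$ is minimal in the complement, $\mathcal{T}^-_p(I)=1$ iff $p\in I$ is maximal in $I$) are as usual. Order ideals of $P^{\mathrm{shift}}_\lambda$ are identified with strict partitions $\nu\subseteq\lambda$. The shifted rook is $R^{\mathrm{shift}}_{ij}:=\sum_{i'\le i,j'\le j}\mathcal{T}^+_{[i',j']}+\sum_{i'\ge i,j'\ge j}\mathcal{T}^-_{[i',j']}-\sum_{i'<i,j'<j,i'<j'}\mathcal{T}^-_{[i',j']}-\sum_{i'>i,j'>j,i'<j'}\mathcal{T}^+_{[i',j']}$ (sums over boxes of $P^{\mathrm{shift}}_\lambda$). Outward corners: $C^{\mathrm{shift}}(\lambda)$ is the set of indices $1\le t\le\ell(\lambda)-1$ with $\lambda_t-\lambda_{t+1}\ge2$; the corner $c=c_t$ occurs at lattice point $(t,\,t+\lambda_{t+1})$ (row coordinate, column coordinate; box $[i,j]$ has southeast corner at lattice point $(i,j)$);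 this is a north step followed by an east step on the southeast border of the shifted diagram. An order ideal $\nu$ contains $c_t$ (written $c_t\in\nu$) iff $\nu_{t+1}=\lambda_{t+1}$ and $\nu_t\ge\lambda_{t+1}+2$. $C^{\mathrm{shift}}_{ij}(\lambda)$ is the set of corners occurring at $(t,t+\lambda_{t+1})$ strictly southeast of the center of box $[i,j]$, i.e. with $t\ge i$ and $t+\lambda_{t+1}\ge j$. *)

theory Defs
  imports "HOL-Probability.Probability"
begin

type_synonym box = "nat \<times> nat"

text \<open>A strict partition is a list of positive, strictly decreasing parts.
  Rows are 1-indexed: part lambda_i is lampart lam i (0 outside 1..length).\<close>

definition strict_partition :: "nat list \<Rightarrow> bool" where
  "strict_partition lam \<longleftrightarrow> sorted_wrt (>) lam \<and> 0 \<notin> set lam"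

definition lampart :: "nat list \<Rightarrow> nat \<Rightarrow> nat" where
  "lampart lam i = (if 1 \<le> i \<and> i \<le> length lam then lam ! (i - 1) else 0)"

definition shift_poset :: "nat list \<Rightarrow> box set" where
  "shift_poset lam = {(i, j). 1 \<le> i \<and> i \<le> length lam \<and> i \<le> j \<and> j < i + lampart lam i}"

definition box_le :: "box \<Rightarrow> box \<Rightarrow> bool" where
  "box_le p q \<longleftrightarrow> fst p \<le> fst q \<and> snd p \<le> snd q"

definition order_ideals :: "nat list \<Rightarrow> box set set" where
  "order_ideals lam = {I. I \<subseteq> shift_poset lam \<and>
      (\<forall>p\<in>I. \<forall>q\<in>shift_poset lam. box_le q p \<longrightarrow> q \<in> I)}"

definition toggle_plus :: "nat list \<Rightarrow> box \<Rightarrow> box set \<Rightarrow> int" where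
  "toggle_plus lam p I = (if p \<in> shift_poset lam \<and> p \<notin> I \<and>
      (\<forall>q\<in>shift_poset lam - I. box_le q p \<longrightarrow> q = p) then 1 else 0)"

definition toggle_minus :: "nat list \<Rightarrow> box \<Rightarrow> box set \<Rightarrow> int" where
  "toggle_minus lam p I = (if p \<in> shift_poset lam \<and> p \<in> I \<and>
      (\<forall>q\<in>I. box_le p q \<longrightarrow> q = p) then 1 else 0)"

definition shift_rook :: "nat list \<Rightarrow> nat \<Rightarrow> nat \<Rightarrow> box set \<Rightarrow> int" where
  "shift_rook lam i j I =
     (\<Sum>p\<in>{p\<in>shift_poset lam. fst p \<le> i \<and> snd p \<le> j}. toggle_plus lam p I)
   + (\<Sum>p\<in>{p\<in>shift_poset lam. fst p \<ge> i \<and> snd p \<ge> j}. toggle_minus lam p I)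
   - (\<Sum>p\<in>{p\<in>shift_poset lam. fst p < i \<and> snd p < j \<and> fst p < snd p}. toggle_minus lam p I)
   - (\<Sum>p\<in>{p\<in>shift_poset lam. fst p > i \<and> snd p > j \<and> fst p < snd p}. toggle_plus lam p I)"

definition ideal_part :: "box set \<Rightarrow> nat \<Rightarrow> nat" where
  "ideal_part I t = card {j. (t, j) \<in> I}"

text \<open>Outward corners, indexed by t, occurring at lattice point (t, t + lambda_{t+1}).\<close>
definition shift_corners :: "nat list \<Rightarrow> nat set" where
  "shift_corners lam = {t. 1 \<le> t \<and> t \<le> length lam - 1 \<and> lampart lam t \<ge> lampart lam (t + 1) + 2}"

definition shift_corners_ij :: "nat list \<Rightarrow> nat \<Rightarrow> nat \<Rightarrow> nat set" where
  "shift_corners_ij lam i j = {t \<in> shift_corners lam. t \<ge> i \<and> t + lampart lam (t + 1) \<ge> j}"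

definition corner_in :: "nat list \<Rightarrow> nat \<Rightarrow> box set \<Rightarrow> bool" where
  "corner_in lam t I \<longleftrightarrow> ideal_part I (t + 1) = lampart lam (t + 1) \<and>
      ideal_part I t \<ge> lampart lam (t + 1) + 2"

end

theory Submission
  imports Defs
begin



locale arithctx =
  fixes n L :: "nat \<Rightarrow> nat" and l i j :: nat
  assumes Ldec: "\<And>t. 1 \<le> t \<Longrightarrow> t \<le> l \<Longrightarrow> L (Suc t) < L t"
    and Lout: "\<And>t. l < t \<Longrightarrow> L t = 0"
    and nle: "\<And>t. n t \<le> L t"
    and ndec: "\<And>t. 1 \<le> t \<Longrightarrow> 0 < n (Suc t) \<Longrightarrow> n (Suc t) < n t"
    and i1: "1 \<le> i" and il: "i \<le> l" and ij: "i \<le> j" and jL: "j < i + L i"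
begin

lemma Lmono: "t \<le> a \<Longrightarrow> 1 \<le> t \<Longrightarrow> a \<le> l \<Longrightarrow> a + L a \<le> t + L t"
proof (induction a rule: dec_induct)
  case base then show ?case by simp
next
  case (step m)
  have "L (Suc m) < L m" using Ldec[of m] step by simp
  then show ?case using step by simp
qed

lemma jbound: "1 \<le> k \<Longrightarrow> k \<le> i \<Longrightarrow> j < k + L k"
  using Lmono[of k i] jL il by simp

definition f :: "nat \<Rightarrow> int" where "f t = (if t + n t \<le> j then 1 else 0)"
definition a :: "nat \<Rightarrow> int" where
  "a t = (if n t < L t \<and> t + n t \<le> j \<and> (t = 1 \<or> n t + 2 \<le> n (t - 1)) then 1 else 0)"
definition b :: "nat \<Rightarrow> int" where
  "b t = (if 1 \<le> n t \<and> (n t = 1 \<or> n (Suc t) + 2 \<le> n t) \<and> t + n t - 1 < j \<and> t < t + n t - 1 then 1 else 0)"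
definition g :: "nat \<Rightarrow> int" where "g t = (if 1 \<le> n t \<and> j \<le> t + n t - 1 then 1 else 0)"
definition m :: "nat \<Rightarrow> int" where
  "m t = (if 1 \<le> n t \<and> (n t = 1 \<or> n (Suc t) + 2 \<le> n t) \<and> j \<le> t + n t - 1 then 1 else 0)"
definition p :: "nat \<Rightarrow> int" where
  "p t = (if n t < L t \<and> j < t + n t \<and> t < t + n t \<and> (t = 1 \<or> n t + 2 \<le> n (t - 1)) then 1 else 0)"
definition cr :: "nat \<Rightarrow> int" where
  "cr t = (if 1 \<le> t \<and> t \<le> l - 1 \<and> L (t + 1) + 2 \<le> L t \<and> i \<le> t \<and> j \<le> t + L (t + 1)
     \<and> n (t + 1) = L (t + 1) \<and> L (t + 1) + 2 \<le> n t then 1 else 0)"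

lemma Xstep: "1 \<le> k \<Longrightarrow> Suc k \<le> i \<Longrightarrow> f k + a (Suc k) - b k = f (Suc k)"
proof -
  assume h: "1 \<le> k" "Suc k \<le> i"
  have d: "n (Suc k) = 0 \<or> n (Suc k) < n k" using ndec[of k] h by auto
  show ?thesis
  using d h jbound[of "Suc k"] ij nle[of k] nle[of "Suc k"]
  unfolding f_def a_def b_def by (auto split: if_splits)
qed

lemma Xlem: "1 \<le> k \<Longrightarrow> k \<le> i \<Longrightarrow> (\<Sum>t\<in>{1..<Suc k}. a t) - (\<Sum>t\<in>{1..<k}. b t) = f k"
proof (induction k rule: dec_induct)
  case base
  then show ?case using jbound[of 1] i1 unfolding a_def f_def by auto
next
  case (step k)
  have "(\<Sum>t\<in>{1..<Suc (Suc k)}. a t) = (\<Sum>t\<in>{1..<Suc k}. a t) + a (Suc k)" by simp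
  moreover have "(\<Sum>t\<in>{1..<Suc k}. b t) = (\<Sum>t\<in>{1..<k}. b t) + b k" using step by simp
  ultimately show ?case using step Xstep[of k] by simp
qed

lemma Lpos: "1 \<le> t \<Longrightarrow> t \<le> l \<Longrightarrow> 1 \<le> L t"
  using Ldec[of t] by simp

lemma Ystep: "i \<le> k \<Longrightarrow> k \<le> l \<Longrightarrow> g (Suc k) + m k - p (Suc k) = g k + cr k"
proof -
  assume a1: "i \<le> k" "k \<le> l"
  have k1: "1 \<le> k" using a1 i1 by simp
  have nk: "n k \<le> L k" and nsk: "n (Suc k) \<le> L (Suc k)" using nle by auto
  show ?thesis
  proof (cases "n (Suc k) = 0")
    case True
    have "g (Suc k) = 0" unfolding g_def using True by simp
    moreover have "p (Suc k) = 0" unfolding p_def using True by simp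
    moreover have "cr k = 0"
    proof (cases "k = l")
      case True
      then have "\<not> k \<le> l - 1" using k1 by simp
      then show ?thesis unfolding cr_def by simp
    next
      case False
      then have "1 \<le> L (Suc k)" using Lpos[of "Suc k"] a1 by simp
      then show ?thesis unfolding cr_def using \<open>n (Suc k) = 0\<close> by simp
    qed
    moreover have "m k = g k" unfolding m_def g_def using True by simp
    ultimately show ?thesis by simp
  next
    case False
    then have lt: "n (Suc k) < n k" using ndec[of k] k1 by simp
    have skl: "Suc k \<le> l" using False nsk Lout[of "Suc k"] by (cases "Suc k \<le> l") auto
    show ?thesis
    proof (cases "j \<le> k + n (Suc k)")
      case True
      have "g (Suc k) = 1" unfolding g_def using True False by simp
      moreover have "g k = 1" unfolding g_def using True lt by simp
      moreover have "m k = (if n (Suc k) + 2 \<le> n k then 1 else 0)" unfolding m_def using True lt False by auto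
      moreover have "p (Suc k) = (if n (Suc k) < L (Suc k) \<and> n (Suc k) + 2 \<le> n k then 1 else 0)"
        unfolding p_def using True lt False k1 by auto
      moreover have "cr k = (if n (Suc k) = L (Suc k) \<and> n (Suc k) + 2 \<le> n k then 1 else 0)"
        unfolding cr_def using True lt False k1 a1 skl nk ij by auto
      ultimately show ?thesis using nsk by auto
    next
      case nj: False
      have "g (Suc k) = 0" unfolding g_def using nj by simp
      moreover have "p (Suc k) = 0" unfolding p_def using nj by simp
      moreover have "cr k = 0" unfolding cr_def using nj nsk by auto
      moreover have "m k = g k"
      proof (cases "n (Suc k) + 2 \<le> n k")
        case True then show ?thesis unfolding m_def g_def by simp
      next
        case c2: False
        then have "n k = n (Suc k) + 1" using lt by simp
        then show ?thesis unfolding m_def g_def using nj by simp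
      qed
      ultimately show ?thesis by simp
    qed
  qed
qed

lemma Ylem: "k \<le> Suc l \<Longrightarrow> i \<le> k \<Longrightarrow> (\<Sum>t\<in>{k..l}. m t) - (\<Sum>t\<in>{Suc k..l}. p t) = g k + (\<Sum>t\<in>{k..l}. cr t)"
proof (induction rule: inc_induct)
  case base
  have "n (Suc l) = 0" using nle[of "Suc l"] Lout[of "Suc l"] by simp
  then show ?case unfolding g_def by simp
next
  case (step k)
  have kl: "k \<le> l" using step by simp
  have s1: "(\<Sum>t\<in>{k..l}. m t) = m k + (\<Sum>t\<in>{Suc k..l}. m t)"
    using kl by (simp add: sum.atLeast_Suc_atMost)
  have s2: "(\<Sum>t\<in>{k..l}. cr t) = cr k + (\<Sum>t\<in>{Suc k..l}. cr t)"
    using kl by (simp add: sum.atLeast_Suc_atMost)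
  have s3: "(\<Sum>t\<in>{Suc k..l}. p t) = p (Suc k) + (\<Sum>t\<in>{Suc (Suc k)..l}. p t)"
  proof (cases "Suc k \<le> l")
    case True then show ?thesis by (simp add: sum.atLeast_Suc_atMost)
  next
    case False
    then have "L (Suc k) = 0" using Lout by simp
    then have "p (Suc k) = 0" unfolding p_def by simp
    then show ?thesis using False by simp
  qed
  show ?case using step.IH s1 s2 s3 Ystep[of k] step.hyps step.prems kl by simp
qed

end

lemma rowsum:
  fixes l :: nat and S :: "(nat \<times> 'b) set"
  assumes "finite S" "S \<subseteq> {1..l} \<times> UNIV"
  shows "(\<Sum>p\<in>S. if snd p = e (fst p) \<and> Q (fst p) then (1::int) else 0)
       = (\<Sum>t\<in>{1..l}. if (t, e t) \<in> S \<and> Q t then 1 else 0)"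
proof -
  have "(\<Sum>p\<in>S. if snd p = e (fst p) \<and> Q (fst p) then (1::int) else 0)
      = of_nat (card {p\<in>S. snd p = e (fst p) \<and> Q (fst p)})"
    using assms(1) by (simp add: sum.inter_filter[symmetric])
  also have "card {p\<in>S. snd p = e (fst p) \<and> Q (fst p)} = card {t\<in>{1..l}. (t, e t) \<in> S \<and> Q t}"
  proof (rule bij_betw_same_card[of fst])
    show "bij_betw fst {p\<in>S. snd p = e (fst p) \<and> Q (fst p)} {t\<in>{1..l}. (t, e t) \<in> S \<and> Q t}"
      unfolding bij_betw_def
    proof
      show "inj_on fst {p\<in>S. snd p = e (fst p) \<and> Q (fst p)}"
        by (auto simp: inj_on_def prod_eq_iff)
      show "fst ` {p\<in>S. snd p = e (fst p) \<and> Q (fst p)} = {t\<in>{1..l}. (t, e t) \<in> S \<and> Q t}"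
      proof
        show "fst ` {p\<in>S. snd p = e (fst p) \<and> Q (fst p)} \<subseteq> {t\<in>{1..l}. (t, e t) \<in> S \<and> Q t}"
          using assms(2) by (force simp: prod_eq_iff)
        show "{t\<in>{1..l}. (t, e t) \<in> S \<and> Q t} \<subseteq> fst ` {p\<in>S. snd p = e (fst p) \<and> Q (fst p)}"
          by (force intro: image_eqI)
      qed
    qed
  qed
  also have "of_nat (card {t\<in>{1..l}. (t, e t) \<in> S \<and> Q t}) = (\<Sum>t\<in>{1..l}. if (t, e t) \<in> S \<and> Q t then (1::int) else 0)"
  proof -
    have "(\<Sum>t\<in>{1..l}. if (t, e t) \<in> S \<and> Q t then (1::int) else 0) = sum (\<lambda>_. 1) {t\<in>{1..l}. (t, e t) \<in> S \<and> Q t}"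
      by (rule sum.inter_filter[symmetric]) simp
    then show ?thesis by simp
  qed
  finally show ?thesis .
qed


lemma interval_set:
  fixes S :: "nat set"
  assumes fin: "finite S" and lo: "\<forall>c\<in>S. t \<le> c"
    and dc: "\<forall>c\<in>S. \<forall>c'. t \<le> c' \<longrightarrow> c' \<le> c \<longrightarrow> c' \<in> S"
  shows "S = {t..<t + card S}"
proof (cases "S = {}")
  case True then show ?thesis by simp
next
  case False
  define M where "M = Max S"
  have MS: "M \<in> S" using fin False M_def by simp
  have "S = {t..M}"
  proof
    show "S \<subseteq> {t..M}" using lo fin M_def by auto
    show "{t..M} \<subseteq> S" using dc MS by auto
  qed
  moreover have "t \<le> M" using lo MS by auto
  ultimately show ?thesis by auto
qed

locale ideal_ctx =
  fixes lam :: "nat list" and I :: "box set"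
  assumes sp: "strict_partition lam" and idl: "I \<in> order_ideals lam"
begin

lemma Ldec: "1 \<le> t \<Longrightarrow> t \<le> length lam \<Longrightarrow> lampart lam (Suc t) < lampart lam t"
proof -
  assume h: "1 \<le> t" "t \<le> length lam"
  have sw: "sorted_wrt (>) lam" and nz: "0 \<notin> set lam" using sp unfolding strict_partition_def by auto
  show ?thesis
  proof (cases "t = length lam")
    case True
    have "lam ! (t - 1) \<in> set lam" using h by simp
    then have "lam ! (t - 1) > 0" using nz by (metis gr0I)
    then show ?thesis using True h unfolding lampart_def by simp
  next
    case False
    then have "lam ! (t - 1) > lam ! t" using sw h sorted_wrt_nth_less[OF sw, of "t - 1" t] by simp
    then show ?thesis using False h unfolding lampart_def by simp
  qed
qed

lemma Lout: "length lam < t \<Longrightarrow> lampart lam t = 0"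
  unfolding lampart_def by simp

lemma Lmono: "t \<le> a \<Longrightarrow> 1 \<le> t \<Longrightarrow> a \<le> length lam \<Longrightarrow> a + lampart lam a \<le> t + lampart lam t"
proof (induction a rule: dec_induct)
  case base then show ?case by simp
next
  case (step m)
  have "lampart lam (Suc m) < lampart lam m" using Ldec[of m] step by simp
  then show ?case using step by simp
qed

lemma Isub: "I \<subseteq> shift_poset lam" using idl unfolding order_ideals_def by auto

lemma Idown: "p \<in> I \<Longrightarrow> q \<in> shift_poset lam \<Longrightarrow> box_le q p \<Longrightarrow> q \<in> I"
  using idl unfolding order_ideals_def by auto

lemma rowsub: "{c. (t, c) \<in> I} \<subseteq> {t..<t + lampart lam t}"
  using Isub unfolding shift_poset_def by auto

lemma row_eq: "{c. (t, c) \<in> I} = {t..<t + ideal_part I t}"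
  unfolding ideal_part_def
proof (rule interval_set)
  show "finite {c. (t, c) \<in> I}" using rowsub finite_subset by blast
  show "\<forall>c\<in>{c. (t, c) \<in> I}. t \<le> c" using rowsub[of t] by auto
  show "\<forall>c\<in>{c. (t, c) \<in> I}. \<forall>c'. t \<le> c' \<longrightarrow> c' \<le> c \<longrightarrow> c' \<in> {c. (t, c) \<in> I}"
  proof (intro ballI allI impI)
    fix c c' assume c: "c \<in> {c. (t, c) \<in> I}" and "t \<le> c'" "c' \<le> c"
    then have "(t, c) \<in> shift_poset lam" using Isub by auto
    then have "(t, c') \<in> shift_poset lam" using \<open>t \<le> c'\<close> \<open>c' \<le> c\<close> unfolding shift_poset_def by auto
    then show "c' \<in> {c. (t, c) \<in> I}" using Idown[of "(t,c)" "(t,c')"] c \<open>c' \<le> c\<close> unfolding box_le_def by auto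
  qed
qed

lemma memI: "(t, c) \<in> I \<longleftrightarrow> t \<le> c \<and> c < t + ideal_part I t"
  using row_eq[of t] by auto

lemma nle: "ideal_part I t \<le> lampart lam t"
proof -
  have "ideal_part I t = card {c. (t, c) \<in> I}" unfolding ideal_part_def by simp
  also have "\<dots> \<le> card {t..<t + lampart lam t}" by (rule card_mono[OF _ rowsub]) simp
  finally show ?thesis by simp
qed

lemma ndec: "1 \<le> t \<Longrightarrow> 0 < ideal_part I (Suc t) \<Longrightarrow> ideal_part I (Suc t) < ideal_part I t"
proof -
  assume h: "1 \<le> t" "0 < ideal_part I (Suc t)"
  let ?k = "ideal_part I (Suc t)"
  have "(Suc t, t + ?k) \<in> I" using memI h by simp
  then have P1: "(Suc t, t + ?k) \<in> shift_poset lam" using Isub by auto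
  then have tl: "Suc t \<le> length lam" unfolding shift_poset_def by simp
  have "?k \<le> lampart lam (Suc t)" by (rule nle)
  also have "\<dots> < lampart lam t" using Ldec[of t] h tl by simp
  finally have "(t, t + ?k) \<in> shift_poset lam" using h tl unfolding shift_poset_def by simp
  then have "(t, t + ?k) \<in> I" using Idown[OF \<open>(Suc t, t + ?k) \<in> I\<close>] unfolding box_le_def by simp
  then show ?thesis using memI by simp
qed

lemma Tplus:
  assumes pP: "(t, c) \<in> shift_poset lam"
  shows "toggle_plus lam (t, c) I = (if c = t + ideal_part I t \<and>
     (t = 1 \<or> ideal_part I t + 2 \<le> ideal_part I (t - 1)) then 1 else 0)"
proof -
  let ?n = "ideal_part I" and ?L = "lampart lam" and ?P = "shift_poset lam"
  have t1: "1 \<le> t" and tl: "t \<le> length lam" and tc: "t \<le> c" and cL: "c < t + ?L t"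
    using pP unfolding shift_poset_def by auto
  have "(t, c) \<notin> I \<and> (\<forall>q\<in>?P - I. box_le q (t, c) \<longrightarrow> q = (t, c)) \<longleftrightarrow>
     c = t + ?n t \<and> (t = 1 \<or> ?n t + 2 \<le> ?n (t - 1))"
  proof
    assume H: "(t, c) \<notin> I \<and> (\<forall>q\<in>?P - I. box_le q (t, c) \<longrightarrow> q = (t, c))"
    have ge: "t + ?n t \<le> c" using H memI[of t c] tc by auto
    have ceq: "c = t + ?n t"
    proof (rule ccontr)
      assume "c \<noteq> t + ?n t"
      then have lt: "t + ?n t < c" using ge by simp
      have "(t, c - 1) \<in> ?P" using pP lt unfolding shift_poset_def by auto
      moreover have "(t, c - 1) \<notin> I" using memI[of t "c - 1"] lt by auto
      moreover have "box_le (t, c - 1) (t, c)" unfolding box_le_def by simp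
      ultimately show False using H lt by auto
    qed
    moreover have "t = 1 \<or> ?n t + 2 \<le> ?n (t - 1)"
    proof (rule ccontr)
      assume C: "\<not> (t = 1 \<or> ?n t + 2 \<le> ?n (t - 1))"
      then have t2: "2 \<le> t" using t1 by simp
      have "?L t < ?L (t - 1)" using Ldec[of "t - 1"] t2 tl by simp
      then have "(t - 1, c) \<in> ?P" using t2 tl tc cL unfolding shift_poset_def by auto
      moreover have "(t - 1, c) \<notin> I" using memI[of "t - 1" c] C ceq t2 by auto
      moreover have "box_le (t - 1, c) (t, c)" unfolding box_le_def by simp
      ultimately show False using H t2 by auto
    qed
    ultimately show "c = t + ?n t \<and> (t = 1 \<or> ?n t + 2 \<le> ?n (t - 1))" by simp
  next
    assume H: "c = t + ?n t \<and> (t = 1 \<or> ?n t + 2 \<le> ?n (t - 1))"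
    have "(t, c) \<notin> I" using H memI[of t c] by simp
    moreover have "\<forall>q\<in>?P - I. box_le q (t, c) \<longrightarrow> q = (t, c)"
    proof (intro ballI impI)
      fix q assume q: "q \<in> ?P - I" and le: "box_le q (t, c)"
      obtain a b where qab: "q = (a, b)" by (cases q)
      have a1: "1 \<le> a" and ab: "a \<le> b" and at: "a \<le> t" and bc: "b \<le> c"
        using q le qab unfolding shift_poset_def box_le_def by auto
      show "q = (t, c)"
      proof (cases "a = t")
        case True
        then have "t + ?n t \<le> b" using q qab memI[of t b] ab by auto
        then show ?thesis using True bc H qab by simp
      next
        case False
        then have t2: "2 \<le> t" and big: "?n t + 2 \<le> ?n (t - 1)" using at a1 H by auto
        define b' where "b' = max b (t - 1)"
        have "(t - 1, b') \<in> I" using memI[of "t - 1" b'] big H bc t2 unfolding b'_def by auto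
        moreover have "box_le (a, b) (t - 1, b')" using at False unfolding box_le_def b'_def by auto
        ultimately have "(a, b) \<in> I" using Idown q qab by blast
        then show ?thesis using q qab by simp
      qed
    qed
    ultimately show "(t, c) \<notin> I \<and> (\<forall>q\<in>?P - I. box_le q (t, c) \<longrightarrow> q = (t, c))" by simp
  qed
  then show ?thesis unfolding toggle_plus_def using pP by simp
qed

lemma Tminus:
  assumes pP: "(t, c) \<in> shift_poset lam"
  shows "toggle_minus lam (t, c) I = (if 1 \<le> ideal_part I t \<and>
     (ideal_part I t = 1 \<or> ideal_part I (Suc t) + 2 \<le> ideal_part I t) \<and> c = t + ideal_part I t - 1 then 1 else 0)"
proof -
  let ?n = "ideal_part I" and ?L = "lampart lam" and ?P = "shift_poset lam"
  have t1: "1 \<le> t" and tl: "t \<le> length lam" and tc: "t \<le> c" and cL: "c < t + ?L t"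
    using pP unfolding shift_poset_def by auto
  have "(t, c) \<in> I \<and> (\<forall>q\<in>I. box_le (t, c) q \<longrightarrow> q = (t, c)) \<longleftrightarrow>
     1 \<le> ?n t \<and> (?n t = 1 \<or> ?n (Suc t) + 2 \<le> ?n t) \<and> c = t + ?n t - 1"
  proof
    assume H: "(t, c) \<in> I \<and> (\<forall>q\<in>I. box_le (t, c) q \<longrightarrow> q = (t, c))"
    have lt: "c < t + ?n t" using H memI[of t c] by auto
    then have n1: "1 \<le> ?n t" using tc by simp
    have ceq: "c = t + ?n t - 1"
    proof (rule ccontr)
      assume "c \<noteq> t + ?n t - 1"
      then have "c + 1 < t + ?n t" using lt by simp
      then have "(t, c + 1) \<in> I" using memI tc by simp
      moreover have "box_le (t, c) (t, c + 1)" unfolding box_le_def by simp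
      ultimately show False using H by auto
    qed
    moreover have "?n t = 1 \<or> ?n (Suc t) + 2 \<le> ?n t"
    proof (rule ccontr)
      assume C: "\<not> (?n t = 1 \<or> ?n (Suc t) + 2 \<le> ?n t)"
      then have "0 < ?n (Suc t)" using n1 by simp
      then have "?n (Suc t) < ?n t" using ndec t1 by simp
      then have eq: "?n (Suc t) = ?n t - 1" using C by arith
      have "(Suc t, c) \<in> I" using memI[of "Suc t" c] eq ceq C n1 by auto
      moreover have "box_le (t, c) (Suc t, c)" unfolding box_le_def by simp
      ultimately show False using H by auto
    qed
    ultimately show "1 \<le> ?n t \<and> (?n t = 1 \<or> ?n (Suc t) + 2 \<le> ?n t) \<and> c = t + ?n t - 1"
      using n1 by simp
  next
    assume H: "1 \<le> ?n t \<and> (?n t = 1 \<or> ?n (Suc t) + 2 \<le> ?n t) \<and> c = t + ?n t - 1"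
    have "(t, c) \<in> I" using H memI[of t c] tc by auto
    moreover have "\<forall>q\<in>I. box_le (t, c) q \<longrightarrow> q = (t, c)"
    proof (intro ballI impI)
      fix q assume q: "q \<in> I" and le: "box_le (t, c) q"
      obtain a b where qab: "q = (a, b)" by (cases q)
      have qP: "(a, b) \<in> ?P" using q qab Isub by auto
      have ta: "t \<le> a" and cb: "c \<le> b" using le qab unfolding box_le_def by auto
      have ab: "a \<le> b" and al: "a \<le> length lam" and bL: "b < a + ?L a"
        using qP unfolding shift_poset_def by auto
      show "q = (t, c)"
      proof (cases "a = t")
        case True
        then have "b < t + ?n t" using q qab memI by auto
        then show ?thesis using True cb H qab by simp
      next
        case False
        then have sa: "Suc t \<le> a" using ta by simp
        have "a + ?L a \<le> Suc t + ?L (Suc t)" using Lmono[OF sa] al by simp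
        then have "(Suc t, b) \<in> ?P" using sa ab al bL unfolding shift_poset_def by auto
        moreover have "box_le (Suc t, b) (a, b)" using sa unfolding box_le_def by simp
        ultimately have "(Suc t, b) \<in> I" using Idown q qab by blast
        then have B: "Suc t \<le> b \<and> b < Suc t + ?n (Suc t)" using memI by simp
        then have "0 < ?n (Suc t)" by simp
        then have "?n (Suc t) < ?n t" using ndec t1 by simp
        then show ?thesis using B H cb by auto
      qed
    qed
    ultimately show "(t, c) \<in> I \<and> (\<forall>q\<in>I. box_le (t, c) q \<longrightarrow> q = (t, c))" by simp
  qed
  then show ?thesis unfolding toggle_minus_def using pP by simp
qed


end


context ideal_ctx
begin
lemma Pfin: "finite (shift_poset lam)"
proof -
  have "shift_poset lam \<subseteq> Sigma {1..length lam} (\<lambda>t. {t..<t + lampart lam t})"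
    unfolding shift_poset_def by auto
  moreover have "finite (Sigma {1..length lam} (\<lambda>t. {t..<t + lampart lam t}))" by auto
  ultimately show ?thesis using finite_subset by blast
qed

lemma Psub: "shift_poset lam \<subseteq> {1..length lam} \<times> UNIV"
  unfolding shift_poset_def by auto

lemma det:
  assumes ijP: "(i, j) \<in> shift_poset lam"
  shows "shift_rook lam i j I = 1 + (\<Sum>t\<in>shift_corners_ij lam i j. if corner_in lam t I then 1 else 0)"
proof -
  let ?n = "ideal_part I" and ?L = "lampart lam" and ?P = "shift_poset lam" and ?l = "length lam"
  have i1: "1 \<le> i" and il: "i \<le> ?l" and ij: "i \<le> j" and jL: "j < i + ?L i"
    using ijP unfolding shift_poset_def by auto
  interpret A: arithctx ?n ?L ?l i j
    using Ldec Lout nle ndec i1 il ij jL by unfold_locales auto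
  define PL where "PL t = (t = 1 \<or> ?n t + 2 \<le> ?n (t - 1))" for t
  define MI where "MI t = (1 \<le> ?n t \<and> (?n t = 1 \<or> ?n (Suc t) + 2 \<le> ?n t))" for t
  have fs: "finite {p \<in> ?P. Q p}" for Q using Pfin by simp
  have ss: "{p \<in> ?P. Q p} \<subseteq> {1..?l} \<times> UNIV" for Q using Psub by auto
  have rs: "\<And>S. finite S \<Longrightarrow> S \<subseteq> {1..?l} \<times> UNIV \<Longrightarrow>
     (\<Sum>p\<in>S. if snd p = e (fst p) \<and> Q (fst p) then (1::int) else 0) = (\<Sum>t\<in>{1..?l}. if (t, e t) \<in> S \<and> Q t then 1 else 0)"
    for e Q by (rule rowsum)
  have S1: "(\<Sum>p\<in>{p\<in>?P. fst p \<le> i \<and> snd p \<le> j}. toggle_plus lam p I) = (\<Sum>t\<in>{1..<Suc i}. A.a t)"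
  proof -
    have "(\<Sum>p\<in>{p\<in>?P. fst p \<le> i \<and> snd p \<le> j}. toggle_plus lam p I)
      = (\<Sum>p\<in>{p\<in>?P. fst p \<le> i \<and> snd p \<le> j}. if snd p = fst p + ?n (fst p) \<and> PL (fst p) then 1 else 0)"
      by (rule sum.cong) (auto simp: Tplus PL_def)
    also have "\<dots> = (\<Sum>t\<in>{1..?l}. if (t, t + ?n t) \<in> {p\<in>?P. fst p \<le> i \<and> snd p \<le> j} \<and> PL t then 1 else 0)"
      by (rule rs[OF fs ss])
    also have "\<dots> = (\<Sum>t\<in>{1..?l}. if t \<le> i then A.a t else 0)"
      by (rule sum.cong) (auto simp: shift_poset_def A.a_def PL_def)
    also have "\<dots> = sum A.a {t\<in>{1..?l}. t \<le> i}" by (rule sum.inter_filter[symmetric]) simp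
    also have "{t\<in>{1..?l}. t \<le> i} = {1..<Suc i}" using il by auto
    finally show ?thesis .
  qed
  have S3: "(\<Sum>p\<in>{p\<in>?P. fst p < i \<and> snd p < j \<and> fst p < snd p}. toggle_minus lam p I) = (\<Sum>t\<in>{1..<i}. A.b t)"
  proof -
    have "(\<Sum>p\<in>{p\<in>?P. fst p < i \<and> snd p < j \<and> fst p < snd p}. toggle_minus lam p I)
      = (\<Sum>p\<in>{p\<in>?P. fst p < i \<and> snd p < j \<and> fst p < snd p}. if snd p = fst p + ?n (fst p) - 1 \<and> MI (fst p) then 1 else 0)"
      by (rule sum.cong) (auto simp: Tminus MI_def)
    also have "\<dots> = (\<Sum>t\<in>{1..?l}. if (t, t + ?n t - 1) \<in> {p\<in>?P. fst p < i \<and> snd p < j \<and> fst p < snd p} \<and> MI t then 1 else 0)"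
      by (rule rs[OF fs ss])
    also have "\<dots> = (\<Sum>t\<in>{1..?l}. if t < i then A.b t else 0)"
    proof (rule sum.cong)
      fix t assume "t \<in> {1..?l}"
      then show "(if (t, t + ?n t - 1) \<in> {p\<in>?P. fst p < i \<and> snd p < j \<and> fst p < snd p} \<and> MI t then 1 else 0)
          = (if t < i then A.b t else 0)"
        using nle[of t] by (auto simp: shift_poset_def A.b_def MI_def)
    qed simp
    also have "\<dots> = sum A.b {t\<in>{1..?l}. t < i}" by (rule sum.inter_filter[symmetric]) simp
    also have "{t\<in>{1..?l}. t < i} = {1..<i}" using il by auto
    finally show ?thesis .
  qed
  have S2: "(\<Sum>p\<in>{p\<in>?P. fst p \<ge> i \<and> snd p \<ge> j}. toggle_minus lam p I) = (\<Sum>t\<in>{i..?l}. A.m t)"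
  proof -
    have "(\<Sum>p\<in>{p\<in>?P. fst p \<ge> i \<and> snd p \<ge> j}. toggle_minus lam p I)
      = (\<Sum>p\<in>{p\<in>?P. fst p \<ge> i \<and> snd p \<ge> j}. if snd p = fst p + ?n (fst p) - 1 \<and> MI (fst p) then 1 else 0)"
      by (rule sum.cong) (auto simp: Tminus MI_def)
    also have "\<dots> = (\<Sum>t\<in>{1..?l}. if (t, t + ?n t - 1) \<in> {p\<in>?P. fst p \<ge> i \<and> snd p \<ge> j} \<and> MI t then 1 else 0)"
      by (rule rs[OF fs ss])
    also have "\<dots> = (\<Sum>t\<in>{1..?l}. if i \<le> t then A.m t else 0)"
    proof (rule sum.cong)
      fix t assume "t \<in> {1..?l}"
      then show "(if (t, t + ?n t - 1) \<in> {p\<in>?P. fst p \<ge> i \<and> snd p \<ge> j} \<and> MI t then 1 else 0)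
          = (if i \<le> t then A.m t else 0)"
        using nle[of t] by (auto simp: shift_poset_def A.m_def MI_def)
    qed simp
    also have "\<dots> = sum A.m {t\<in>{1..?l}. i \<le> t}" by (rule sum.inter_filter[symmetric]) simp
    also have "{t\<in>{1..?l}. i \<le> t} = {i..?l}" using i1 by auto
    finally show ?thesis .
  qed
  have S4: "(\<Sum>p\<in>{p\<in>?P. fst p > i \<and> snd p > j \<and> fst p < snd p}. toggle_plus lam p I) = (\<Sum>t\<in>{Suc i..?l}. A.p t)"
  proof -
    have "(\<Sum>p\<in>{p\<in>?P. fst p > i \<and> snd p > j \<and> fst p < snd p}. toggle_plus lam p I)
      = (\<Sum>p\<in>{p\<in>?P. fst p > i \<and> snd p > j \<and> fst p < snd p}. if snd p = fst p + ?n (fst p) \<and> PL (fst p) then 1 else 0)"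
      by (rule sum.cong) (auto simp: Tplus PL_def)
    also have "\<dots> = (\<Sum>t\<in>{1..?l}. if (t, t + ?n t) \<in> {p\<in>?P. fst p > i \<and> snd p > j \<and> fst p < snd p} \<and> PL t then 1 else 0)"
      by (rule rs[OF fs ss])
    also have "\<dots> = (\<Sum>t\<in>{1..?l}. if i < t then A.p t else 0)"
      by (rule sum.cong) (auto simp: shift_poset_def A.p_def PL_def)
    also have "\<dots> = sum A.p {t\<in>{1..?l}. i < t}" by (rule sum.inter_filter[symmetric]) simp
    also have "{t\<in>{1..?l}. i < t} = {Suc i..?l}" by auto
    finally show ?thesis .
  qed
  have C: "(\<Sum>t\<in>shift_corners_ij lam i j. if corner_in lam t I then (1::int) else 0) = (\<Sum>t\<in>{i..?l}. A.cr t)"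
  proof -
    have sub: "{t\<in>{i..?l}. t \<in> shift_corners_ij lam i j} = shift_corners_ij lam i j"
      unfolding shift_corners_ij_def shift_corners_def by auto
    have "(\<Sum>t\<in>shift_corners_ij lam i j. if corner_in lam t I then (1::int) else 0)
        = (\<Sum>t\<in>{i..?l}. if t \<in> shift_corners_ij lam i j then (if corner_in lam t I then 1 else 0) else 0)"
    proof -
      have "(\<Sum>t\<in>{i..?l}. if t \<in> shift_corners_ij lam i j then (if corner_in lam t I then 1 else 0) else (0::int))
        = (\<Sum>t\<in>{t\<in>{i..?l}. t \<in> shift_corners_ij lam i j}. if corner_in lam t I then 1 else 0)"
        by (rule sum.inter_filter[symmetric]) simp
      from this[unfolded sub] show ?thesis by (rule sym)
    qed
    also have "\<dots> = (\<Sum>t\<in>{i..?l}. A.cr t)"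
      by (rule sum.cong) (auto simp: shift_corners_ij_def shift_corners_def corner_in_def A.cr_def)
    finally show ?thesis .
  qed
  have X: "(\<Sum>t\<in>{1..<Suc i}. A.a t) - (\<Sum>t\<in>{1..<i}. A.b t) = A.f i"
    using A.Xlem[of i] i1 by simp
  have Y: "(\<Sum>t\<in>{i..?l}. A.m t) - (\<Sum>t\<in>{Suc i..?l}. A.p t) = A.g i + (\<Sum>t\<in>{i..?l}. A.cr t)"
    using A.Ylem[of i] il by simp
  have fg: "A.f i + A.g i = 1" unfolding A.f_def A.g_def using ij by auto
  show ?thesis unfolding shift_rook_def S1 S2 S3 S4 C using X Y fg by linarith
qed

end




lemma Pfin0: "finite (shift_poset lam)"
proof -
  have "shift_poset lam \<subseteq> Sigma {1..length lam} (\<lambda>t. {t..<t + lampart lam t})"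
    unfolding shift_poset_def by auto
  moreover have "finite (Sigma {1..length lam} (\<lambda>t. {t..<t + lampart lam t}))" by auto
  ultimately show ?thesis using finite_subset by blast
qed

theorem lemma5p4:
  fixes lam :: "nat list" and \<mu> :: "box set pmf" and i j :: nat
  assumes "strict_partition lam"
    and "set_pmf \<mu> \<subseteq> order_ideals lam"
    and "(i, j) \<in> shift_poset lam"
  shows "measure_pmf.expectation \<mu> (\<lambda>I. real_of_int (shift_rook lam i j I))
       = 1 + (\<Sum>t\<in>shift_corners_ij lam i j. measure_pmf.prob \<mu> {I. corner_in lam t I})"
proof -
  let ?C = "shift_corners_ij lam i j"
  have "order_ideals lam \<subseteq> Pow (shift_poset lam)" unfolding order_ideals_def by auto
  then have fin: "finite (set_pmf \<mu>)" using assms(2) Pfin0[of lam]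
    by (meson finite_Pow_iff finite_subset)
  have eq: "AE I in measure_pmf \<mu>. real_of_int (shift_rook lam i j I)
      = 1 + (\<Sum>t\<in>?C. indicator {I. corner_in lam t I} I)"
    unfolding AE_measure_pmf_iff
  proof
    fix I assume "I \<in> set_pmf \<mu>"
    then have "I \<in> order_ideals lam" using assms(2) by auto
    then have "shift_rook lam i j I = 1 + (\<Sum>t\<in>?C. if corner_in lam t I then 1 else 0)"
      using ideal_ctx.det[of lam I i j] assms(1,3) unfolding ideal_ctx_def by blast
    then show "real_of_int (shift_rook lam i j I) = 1 + (\<Sum>t\<in>?C. indicator {I. corner_in lam t I} I)"
      by (auto simp: indicator_def of_int_sum intro!: sum.cong)
  qed
  have "measure_pmf.expectation \<mu> (\<lambda>I. real_of_int (shift_rook lam i j I))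
      = measure_pmf.expectation \<mu> (\<lambda>I. 1 + (\<Sum>t\<in>?C. indicator {I. corner_in lam t I} I))"
    by (rule integral_cong_AE) (use eq in auto)
  also have "\<dots> = measure_pmf.expectation \<mu> (\<lambda>I. 1) + measure_pmf.expectation \<mu> (\<lambda>I. \<Sum>t\<in>?C. indicator {I. corner_in lam t I} I)"
    by (rule Bochner_Integration.integral_add) (rule integrable_measure_pmf_finite[OF fin])+
  also have "measure_pmf.expectation \<mu> (\<lambda>I. 1) = (1::real)" by (simp add: measure_pmf.prob_space)
  also have "measure_pmf.expectation \<mu> (\<lambda>I. \<Sum>t\<in>?C. indicator {I. corner_in lam t I} I)
      = (\<Sum>t\<in>?C. measure_pmf.expectation \<mu> (indicator {I. corner_in lam t I} :: box set \<Rightarrow> real))"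
    by (rule Bochner_Integration.integral_sum) (simp add: integrable_measure_pmf_finite[OF fin])
  also have "\<dots> = (\<Sum>t\<in>?C. measure_pmf.prob \<mu> {I. corner_in lam t I})"
    by simp
  finally show ?thesis .
qed

end
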